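(* Let $(A,\Delta)=\mathrm{QMap}_\phi(\mathrm{Qs}(M_2))$ with generators $\alpha,\beta,\gamma$ as described below, and set $X=\alpha+\alpha^*$, $Y=\beta+\gamma$. Then $X=X^*$, $Y=Y^*$, $XY+YX=0$, $X^2+Y^2=\mathbb{1}_A$, $\Delta(X)=\mathbb{1}_A\otimes X+X\otimes Y$ and $\Delta(Y)=Y\otimes Y$.
   Context: $A$ is the universal unital $\mathrm{C}^*$-algebra generated by $\alpha,\beta,\gamma$ subject to $\beta=\beta^*$, $\gamma=\gamma^*$, $\alpha^*\alpha+\gamma^2+\alpha\alpha^*+\beta^2=\mathbb{1}$, $\alpha^*\beta+\gamma\alpha^*+\alpha\gamma+\beta\alpha=0$, $\alpha^2+\beta\gamma=0$, $\alpha\beta+\beta\alpha^*=0$, $\gamma\alpha+\alpha^*\gamma=0$, and $\Delta:A\to A\otimes A$ (minimal tensor product) is the unital $*$-homomorphism given by $\Delta(\alpha)=\mathbb{1}\otimes\alpha+(\alpha^*\alpha+\gamma^2)\otimes(\alpha^*-\alpha)+\alpha\otimes\beta+\alpha^*\otimes\gamma$, $\Delta(\beta)=(\alpha\gamma+\beta\alpha)\otimes(\alpha-\alpha^* )+\beta\otimes\beta+\gamma\otimes\gamma$, $\Delta(\gamma)=(\beta\alpha+\alpha\gamma)\otimes(\alpha^*-\alpha)+\gamma\otimes\beta+\beta\otimes\gamma$. (This $(A,\Delta)$ is the quantum commutant of the automorphism $\phi(m)=wmw$, $w=\begin{bmatrix}0&1\\1&0\end{bmatrix}$, of $M_2$.)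 *)

theory Defs
  imports Main
begin

text \<open>A is modelled by a unital ring carrying an
involution sA (the *-operation); the minimal tensor product A (x) A is modelled by
a unital ring B with involution sB together with the elementary tensor map
tens a b = a (x) b, which is biadditive, multiplicative, unital and *-compatible.\<close>

definition involution :: "('a::ring_1 \<Rightarrow> 'a) \<Rightarrow> bool" where
  "involution s \<longleftrightarrow>
     (\<forall>x. s (s x) = x) \<and> (\<forall>x y. s (x + y) = s x + s y) \<and>
     (\<forall>x y. s (x * y) = s y * s x) \<and> s 1 = 1"

definition elementary_tensor ::
  "('a::ring_1 \<Rightarrow> 'a) \<Rightarrow> ('b::ring_1 \<Rightarrow> 'b) \<Rightarrow> ('a \<Rightarrow> 'a \<Rightarrow> 'b) \<Rightarrow> bool" where
  "elementary_tensor sA sB tens \<longleftrightarrow>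
     (\<forall>a b c. tens (a + b) c = tens a c + tens b c) \<and>
     (\<forall>a b c. tens a (b + c) = tens a b + tens a c) \<and>
     (\<forall>a b c d. tens a b * tens c d = tens (a * c) (b * d)) \<and>
     tens 1 1 = 1 \<and>
     (\<forall>a b. sB (tens a b) = tens (sA a) (sA b))"

definition unital_star_hom ::
  "('a::ring_1 \<Rightarrow> 'a) \<Rightarrow> ('b::ring_1 \<Rightarrow> 'b) \<Rightarrow> ('a \<Rightarrow> 'b) \<Rightarrow> bool" where
  "unital_star_hom sA sB D \<longleftrightarrow>
     (\<forall>x y. D (x + y) = D x + D y) \<and> (\<forall>x y. D (x * y) = D x * D y) \<and>
     D 1 = 1 \<and> (\<forall>x. D (sA x) = sB (D x))"

definition qmap_relations ::
  "('a::ring_1 \<Rightarrow> 'a) \<Rightarrow> 'a \<Rightarrow> 'a \<Rightarrow> 'a \<Rightarrow> bool" where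
  "qmap_relations s \<alpha> \<beta> \<gamma> \<longleftrightarrow>
     s \<beta> = \<beta> \<and> s \<gamma> = \<gamma> \<and>
     s \<alpha> * \<alpha> + \<gamma>^2 + \<alpha> * s \<alpha> + \<beta>^2 = 1 \<and>
     s \<alpha> * \<beta> + \<gamma> * s \<alpha> + \<alpha> * \<gamma> + \<beta> * \<alpha> = 0 \<and>
     \<alpha>^2 + \<beta> * \<gamma> = 0 \<and>
     \<alpha> * \<beta> + \<beta> * s \<alpha> = 0 \<and>
     \<gamma> * \<alpha> + s \<alpha> * \<gamma> = 0"

end

theory Submission
  imports Defs
begin

lemma rearr1: fixes a b c d e f Z1 Z2 :: "'b::ab_group_add"
  assumes "Z1 + Z2 = 0"
  shows "a+Z1+b+c + (d+Z2+e+f) = (a+d) + ((b+e)+(f+c))"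
proof -
  have "Z2 = - Z1" using assms by (simp add: add_eq_0_iff)
  thus ?thesis by (simp add: algebra_simps)
qed

lemma rearr2: fixes p q r s Z1 Z2 :: "'b::ab_group_add"
  assumes "Z1 + Z2 = 0"
  shows "Z1+p+q + (Z2+r+s) = (p+s) + (r+q)"
proof -
  have "Z2 = - Z1" using assms by (simp add: add_eq_0_iff)
  thus ?thesis by (simp add: algebra_simps)
qed

theorem mainTheorem9:
  fixes sA :: "'a::ring_1 \<Rightarrow> 'a" and sB :: "'b::ring_1 \<Rightarrow> 'b"
    and tens :: "'a \<Rightarrow> 'a \<Rightarrow> 'b" and \<Delta> :: "'a \<Rightarrow> 'b"
    and \<alpha> \<beta> \<gamma> :: 'a
  assumes "involution sA" and "involution sB"
    and "elementary_tensor sA sB tens"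
    and "unital_star_hom sA sB \<Delta>"
    and "qmap_relations sA \<alpha> \<beta> \<gamma>"
    and "\<Delta> \<alpha> = tens 1 \<alpha> + tens (sA \<alpha> * \<alpha> + \<gamma>^2) (sA \<alpha> - \<alpha>)
              + tens \<alpha> \<beta> + tens (sA \<alpha>) \<gamma>"
    and "\<Delta> \<beta> = tens (\<alpha> * \<gamma> + \<beta> * \<alpha>) (\<alpha> - sA \<alpha>) + tens \<beta> \<beta> + tens \<gamma> \<gamma>"
    and "\<Delta> \<gamma> = tens (\<beta> * \<alpha> + \<alpha> * \<gamma>) (sA \<alpha> - \<alpha>) + tens \<gamma> \<beta> + tens \<beta> \<gamma>"
  shows "let X = \<alpha> + sA \<alpha>; Y = \<beta> + \<gamma> in
           sA X = X \<and> sA Y = Y \<and> X * Y + Y * X = 0 \<and> X^2 + Y^2 = 1 \<and>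
           \<Delta> X = tens 1 X + tens X Y \<and> \<Delta> Y = tens Y Y"
proof -
  note I = assms(1)[unfolded involution_def]
  note T = assms(3)[unfolded elementary_tensor_def]
  note D = assms(4)[unfolded unital_star_hom_def]
  note R = assms(5)[unfolded qmap_relations_def]
  have sadd: "\<And>x y. sA (x + y) = sA x + sA y" using I by blast
  have smul: "\<And>x y. sA (x * y) = sA y * sA x" using I by blast
  have ss: "\<And>x. sA (sA x) = x" using I by blast
  have sB_add: "\<And>x y. sB (x + y) = sB x + sB y" using assms(2) unfolding involution_def by blast
  have tl: "\<And>a b c. tens (a + b) c = tens a c + tens b c" using T by blast
  have tr: "\<And>a b c. tens a (b + c) = tens a b + tens a c" using T by blast
  have ts: "\<And>a b. sB (tens a b) = tens (sA a) (sA b)" using T by blast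
  have Dadd: "\<And>x y. \<Delta> (x + y) = \<Delta> x + \<Delta> y" using D by blast
  have Ds: "\<And>x. \<Delta> (sA x) = sB (\<Delta> x)" using D by blast
  have t0: "tens a 0 = 0" for a using tr[of a 0 0] by simp
  have tneg: "tens a (- b) = - tens a b" for a b
  proof -
    have "tens a b + tens a (-b) = 0" using tr[of a b "-b"] t0 by simp
    thus ?thesis by (simp add: add_eq_0_iff)
  qed
  have s0: "sA 0 = 0" using sadd[of 0 0] by simp
  have sneg: "sA (- x) = - sA x" for x
  proof -
    have "sA x + sA (-x) = 0" using sadd[of x "-x"] s0 by simp
    thus ?thesis by (simp add: add_eq_0_iff)
  qed
  have ssub: "\<And>x y. sA (x - y) = sA x - sA y" by (metis diff_conv_add_uminus sadd sneg)
  have sb: "sA \<beta> = \<beta>" and sc: "sA \<gamma> = \<gamma>" using R by auto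
  have r3: "sA \<alpha> * \<alpha> + \<gamma>^2 + \<alpha> * sA \<alpha> + \<beta>^2 = 1" using R by blast
  have r4: "sA \<alpha> * \<beta> + \<gamma> * sA \<alpha> + \<alpha> * \<gamma> + \<beta> * \<alpha> = 0" using R by blast
  have r5: "\<alpha>^2 + \<beta> * \<gamma> = 0" using R by blast
  have r6: "\<alpha> * \<beta> + \<beta> * sA \<alpha> = 0" using R by blast
  have r7: "\<gamma> * \<alpha> + sA \<alpha> * \<gamma> = 0" using R by blast
  have r5': "sA \<alpha> ^2 + \<gamma> * \<beta> = 0"
  proof -
    have "sA (\<alpha>^2 + \<beta> * \<gamma>) = 0" using r5 s0 by simp
    thus ?thesis by (simp add: sadd smul sb sc power2_eq_square)
  qed
  have P: "sA (sA \<alpha> * \<alpha> + \<gamma>^2) = sA \<alpha> * \<alpha> + \<gamma>^2"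
    by (simp add: sadd smul ss sc power2_eq_square)
  have dd: "(u - v) + (v - u) = (0::'a)" for u v by simp
  have s1: "sA 1 = 1" using I by blast
  have sc2: "sA (\<gamma>^2) = \<gamma>^2" by (simp add: power2_eq_square smul sc)
  have c1: "sA (\<alpha> + sA \<alpha>) = \<alpha> + sA \<alpha>" by (simp add: sadd ss add.commute)
  have c2: "sA (\<beta> + \<gamma>) = \<beta> + \<gamma>" by (simp add: sadd sb sc)
  have c3: "(\<alpha> + sA \<alpha>) * (\<beta> + \<gamma>) + (\<beta> + \<gamma>) * (\<alpha> + sA \<alpha>) = 0"
  proof -
    have "(\<alpha> + sA \<alpha>) * (\<beta> + \<gamma>) + (\<beta> + \<gamma>) * (\<alpha> + sA \<alpha>) =
      (sA \<alpha> * \<beta> + \<gamma> * sA \<alpha> + \<alpha> * \<gamma> + \<beta> * \<alpha>) + (\<alpha> * \<beta> + \<beta> * sA \<alpha>) + (\<gamma> * \<alpha> + sA \<alpha> * \<gamma>)"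
      by (simp add: algebra_simps)
    thus ?thesis using r4 r6 r7 by simp
  qed
  have c4: "(\<alpha> + sA \<alpha>)^2 + (\<beta> + \<gamma>)^2 = 1"
  proof -
    have "(\<alpha> + sA \<alpha>)^2 + (\<beta> + \<gamma>)^2 = (sA \<alpha> * \<alpha> + \<gamma>^2 + \<alpha> * sA \<alpha> + \<beta>^2)
        + (\<alpha>^2 + \<beta> * \<gamma>) + (sA \<alpha> ^2 + \<gamma> * \<beta>)"
      by (simp add: power2_eq_square algebra_simps)
    thus ?thesis using r3 r5 r5' by simp
  qed
  have c5: "\<Delta> (\<alpha> + sA \<alpha>) = tens 1 (\<alpha> + sA \<alpha>) + tens (\<alpha> + sA \<alpha>) (\<beta> + \<gamma>)"
  proof -
    have "\<Delta> (\<alpha> + sA \<alpha>) = \<Delta> \<alpha> + sB (\<Delta> \<alpha>)" by (simp add: Dadd Ds)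
    also have "... = tens 1 \<alpha> + tens (sA \<alpha> * \<alpha> + \<gamma>^2) (sA \<alpha> - \<alpha>)
              + tens \<alpha> \<beta> + tens (sA \<alpha>) \<gamma>
       + (tens 1 (sA \<alpha>) + tens (sA \<alpha> * \<alpha> + \<gamma>^2) (\<alpha> - sA \<alpha>)
              + tens (sA \<alpha>) \<beta> + tens \<alpha> \<gamma>)"
      using assms(6) by (simp add: sB_add ts P ssub ss sb sc sadd smul sc2 s1)
    also have "... = (tens 1 \<alpha> + tens 1 (sA \<alpha>)) + ((tens \<alpha> \<beta> + tens (sA \<alpha>) \<beta>) + (tens \<alpha> \<gamma> + tens (sA \<alpha>) \<gamma>))"
      by (rule rearr1) (simp only: tr[symmetric] t0 dd)
    also have "... = tens 1 (\<alpha> + sA \<alpha>) + tens (\<alpha> + sA \<alpha>) (\<beta> + \<gamma>)"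
      by (simp only: tl tr)
    finally show ?thesis .
  qed
  have c6: "\<Delta> (\<beta> + \<gamma>) = tens (\<beta> + \<gamma>) (\<beta> + \<gamma>)"
  proof -
    have "\<Delta> (\<beta> + \<gamma>) = tens (\<alpha> * \<gamma> + \<beta> * \<alpha>) (\<alpha> - sA \<alpha>) + tens \<beta> \<beta> + tens \<gamma> \<gamma>
        + (tens (\<alpha> * \<gamma> + \<beta> * \<alpha>) (sA \<alpha> - \<alpha>) + tens \<gamma> \<beta> + tens \<beta> \<gamma>)"
      using assms(7,8) by (simp add: Dadd add.commute)
    also have "... = (tens \<beta> \<beta> + tens \<beta> \<gamma>) + (tens \<gamma> \<beta> + tens \<gamma> \<gamma>)"
      by (rule rearr2) (simp only: tr[symmetric] t0 dd add.commute[of "\<beta> * \<alpha>"])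
    also have "... = tens (\<beta> + \<gamma>) (\<beta> + \<gamma>)"
      by (simp only: tl tr ac_simps)
    finally show ?thesis .
  qed
  show ?thesis using c1 c2 c3 c4 c5 c6 by (simp add: Let_def)
qed

end
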